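(* Let $N\ge 1$, let $q\in\mathbb C$, and let $S_N$ be the symmetric group with group algebra $\mathbb C[S_N]$, with composition convention $(\sigma_2\sigma_1)(i)=\sigma_2(\sigma_1(i))$. For a transposition $t=(A,A+1)$ of neighboring integers and $x\in\mathbb C$, let $w_{t,x}:\mathbb C[S_N]\to\mathbb C[S_N]$ be the linear operator given on $\sigma\in S_N$ by $$w_{t,x}(\sigma)=\begin{cases}(1-x)\sigma+x\,t\sigma, & \text{if } \sigma^{-1}(A)<\sigma^{-1}(A+1),\\ (1-qx)\sigma+qx\,t\sigma, & \text{if } \sigma^{-1}(A)>\sigma^{-1}(A+1).\end{cases}$$ For transpositions of neighboring integers $t_1,\dots,t_n$ and parameters $x_1,\dots,x_n\in\mathbb C$, define coefficients $f_n(s\to\pi)$, $s,\pi\in S_N$, by $$w_{t_n,x_n}w_{t_{n-1},x_{n-1}}\cdots w_{t_1,x_1}\, s=\sum_{\pi\in S_N} f_n(s\to\pi)\,\pi .$$ Let $T=(i,i+1)$ be a transposition of neighboring integers, let $s,\pi\in S_N$ be arbitrary with $s(i)<s(i+1)$, and let $t_1,\dots,t_n$, $x_1,\dots,x_n$ be arbitrary. Then $$f_n(sT\to\pi)=\begin{cases} f_n(s\to\pi T)+(1-q)f_n(s\to\pi), & \text{if } \pi(i)>\pi(i+1),\\ q\,f_n(s\to \pi T), & \text{if } \pi(i)<\pi(i+1).\end{cases}$$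
   Context: All objects are defined in the claim. Note that $sT$ and $\pi T$ denote compositions in $S_N$ (first apply $T$, then $s$ resp. $\pi$). *)

theory Defs
  imports "HOL-Combinatorics.Combinatorics" "HOL-Analysis.Analysis"
begin

text \<open>Elements of the group algebra
  C[S_N] are represented as coefficient functions on permutations; only coefficients at
  elements of S_N matter (sums range over S_N).\<close>

definition SN :: "nat \<Rightarrow> (nat \<Rightarrow> nat) set" where
  "SN N = {\<sigma>. \<sigma> permutes {1..N}}"

definition delta :: "(nat \<Rightarrow> nat) \<Rightarrow> (nat \<Rightarrow> nat) \<Rightarrow> complex" where
  "delta \<sigma> = (\<lambda>\<tau>. if \<tau> = \<sigma> then 1 else 0)"

definition wbasis :: "complex \<Rightarrow> nat \<Rightarrow> complex \<Rightarrow> (nat \<Rightarrow> nat) \<Rightarrow> (nat \<Rightarrow> nat) \<Rightarrow> complex" where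
  "wbasis q A x \<sigma> =
     (let t = Transposition.transpose A (A + 1) in
      if inv \<sigma> A < inv \<sigma> (A + 1)
      then (\<lambda>\<tau>. (1 - x) * delta \<sigma> \<tau> + x * delta (t \<circ> \<sigma>) \<tau>)
      else (\<lambda>\<tau>. (1 - q * x) * delta \<sigma> \<tau> + q * x * delta (t \<circ> \<sigma>) \<tau>))"

definition wop :: "complex \<Rightarrow> nat \<Rightarrow> nat \<Rightarrow> complex \<Rightarrow> ((nat \<Rightarrow> nat) \<Rightarrow> complex) \<Rightarrow> ((nat \<Rightarrow> nat) \<Rightarrow> complex)" where
  "wop q N A x v = (\<lambda>\<tau>. \<Sum>\<sigma>\<in>SN N. v \<sigma> * wbasis q A x \<sigma> \<tau>)"

text \<open>ts = [(A_1,x_1), ..., (A_n,x_n)], t_k = (A_k, A_k+1); w_{t_1,x_1} is applied first.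
  fcoef q N ts s \<pi> = f_n(s \<rightarrow> \<pi>).\<close>
definition fcoef :: "complex \<Rightarrow> nat \<Rightarrow> (nat \<times> complex) list \<Rightarrow> (nat \<Rightarrow> nat) \<Rightarrow> (nat \<Rightarrow> nat) \<Rightarrow> complex" where
  "fcoef q N ts s \<pi> = fold (\<lambda>(A, x) v. wop q N A x v) ts (delta s) \<pi>"

end

theory Submission
  imports Defs
begin

definition alf :: "complex \<Rightarrow> nat \<Rightarrow> complex \<Rightarrow> (nat \<Rightarrow> nat) \<Rightarrow> complex" where
  "alf q A x \<sigma> = (if inv \<sigma> A < inv \<sigma> (A + 1) then 1 - x else 1 - q * x)"
definition bet :: "complex \<Rightarrow> nat \<Rightarrow> complex \<Rightarrow> (nat \<Rightarrow> nat) \<Rightarrow> complex" where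
  "bet q A x \<sigma> = (if inv \<sigma> A < inv \<sigma> (A + 1) then x else q * x)"

lemma wbasis_eq:
  "wbasis q A x \<sigma> \<tau> = alf q A x \<sigma> * delta \<sigma> \<tau> + bet q A x \<sigma> * delta (Transposition.transpose A (A+1) \<circ> \<sigma>) \<tau>"
  by (simp add: wbasis_def alf_def bet_def Let_def)

lemma tt: "Transposition.transpose a b \<circ> (Transposition.transpose a b \<circ> f) = f"
  by (simp add: comp_assoc[symmetric])

lemma wop_eq:
  assumes "1 \<le> A" "A + 1 \<le> N"
  shows "wop q N A x v \<tau> = (if \<tau> \<in> SN N then v \<tau> * alf q A x \<tau>
     + v (Transposition.transpose A (A+1) \<circ> \<tau>) * bet q A x (Transposition.transpose A (A+1) \<circ> \<tau>) else 0)"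
proof -
  let ?t = "Transposition.transpose A (A+1)"
  have tp: "?t permutes {1..N}" using assms by (intro permutes_swap_id) auto
  have mem: "?t \<circ> \<tau> \<in> SN N \<longleftrightarrow> \<tau> \<in> SN N"
  proof
    assume "?t \<circ> \<tau> \<in> SN N"
    then have "?t \<circ> (?t \<circ> \<tau>) \<in> SN N" using tp by (auto simp: SN_def intro: permutes_compose)
    then show "\<tau> \<in> SN N" by (simp only: tt)
  qed (use tp in \<open>auto simp: SN_def intro: permutes_compose\<close>)
  have eq: "(\<tau> = ?t \<circ> \<sigma>) \<longleftrightarrow> (\<sigma> = ?t \<circ> \<tau>)" for \<sigma>
    by (metis tt)
  have "wop q N A x v \<tau> = (\<Sum>\<sigma>\<in>SN N. (if \<sigma> = \<tau> then v \<sigma> * alf q A x \<sigma> else 0))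
      + (\<Sum>\<sigma>\<in>SN N. (if \<sigma> = ?t \<circ> \<tau> then v \<sigma> * bet q A x \<sigma> else 0))"
    unfolding wop_def wbasis_eq delta_def sum.distrib[symmetric]
    by (rule sum.cong[OF refl], simp only: eq) (simp add: algebra_simps)
  also have "\<dots> = (if \<tau> \<in> SN N then v \<tau> * alf q A x \<tau>
     + v (?t \<circ> \<tau>) * bet q A x (?t \<circ> \<tau>) else 0)"
    using mem by (simp add: sum.delta' finite_permutations SN_def)
  finally show ?thesis .
qed

lemma swap_key:
  fixes \<rho> :: "nat \<Rightarrow> nat"
  assumes "inj \<rho>" "\<rho> b = a \<and> \<rho> (b+1) = a+1 \<or> \<rho> b = a+1 \<and> \<rho> (b+1) = a"
  shows "Transposition.transpose a (a+1) \<circ> \<rho> = \<rho> \<circ> Transposition.transpose b (b+1)"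
proof
  fix j
  show "(Transposition.transpose a (a+1) \<circ> \<rho>) j = (\<rho> \<circ> Transposition.transpose b (b+1)) j"
  proof (cases "j = b \<or> j = b + 1")
    case True then show ?thesis using assms(2) by auto
  next
    case False
    then have "\<rho> j \<noteq> \<rho> b" "\<rho> j \<noteq> \<rho> (b+1)" using assms(1) by (auto dest: injD)
    then show ?thesis using False assms(2) by (auto simp: Transposition.transpose_def)
  qed
qed

lemma swap_cmp:
  fixes \<rho> :: "nat \<Rightarrow> nat"
  assumes "inj \<rho>" "Transposition.transpose a (a+1) \<circ> \<rho> \<noteq> \<rho> \<circ> Transposition.transpose b (b+1)"
  shows "((Transposition.transpose a (a+1) \<circ> \<rho>) b < (Transposition.transpose a (a+1) \<circ> \<rho>) (b+1)) \<longleftrightarrow> (\<rho> b < \<rho> (b+1))"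
proof -
  have n: "\<not> (\<rho> b = a \<and> \<rho> (b+1) = a+1 \<or> \<rho> b = a+1 \<and> \<rho> (b+1) = a)"
    using swap_key[OF assms(1)] assms(2) by blast
  have d: "\<rho> b \<noteq> \<rho> (b+1)" proof
    assume "\<rho> b = \<rho> (b+1)" then have "b = b + 1" by (rule injD[OF assms(1)])
    then show False by simp
  qed
  have g: "\<And>u w::nat. u \<noteq> w \<Longrightarrow> \<not>(u=a\<and>w=a+1 \<or> u=a+1\<and>w=a) \<Longrightarrow>
     (Transposition.transpose a (a+1) u < Transposition.transpose a (a+1) w \<longleftrightarrow> u < w)"
    unfolding Transposition.transpose_def by auto
  show ?thesis using g[OF d n] by simp
qed

lemma swap_cmp':
  fixes \<rho> :: "nat \<Rightarrow> nat"
  assumes "inj \<rho>" "Transposition.transpose a (a+1) \<circ> \<rho> \<noteq> \<rho> \<circ> Transposition.transpose b (b+1)"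
  shows "((Transposition.transpose a (a+1) \<circ> \<rho>) (b+1) < (Transposition.transpose a (a+1) \<circ> \<rho>) b) \<longleftrightarrow> (\<rho> (b+1) < \<rho> b)"
proof -
  have i2: "inj (Transposition.transpose a (a+1) \<circ> \<rho>)" using assms(1) by (simp add: inj_compose)
  have ne: "b \<noteq> b + 1" by simp
  have d1: "\<rho> b \<noteq> \<rho> (b+1)" using injD[OF assms(1)] ne by blast
  have d2: "(Transposition.transpose a (a+1) \<circ> \<rho>) b \<noteq> (Transposition.transpose a (a+1) \<circ> \<rho>) (b+1)"
    using injD[OF i2] ne by blast
  show ?thesis using swap_cmp[OF assms] d1 d2 by linarith
qed

lemma asc_inv:
  fixes \<tau> :: "nat \<Rightarrow> nat"
  assumes "bij \<tau>" "Transposition.transpose A (A+1) \<circ> \<tau> \<noteq> \<tau> \<circ> Transposition.transpose i (i+1)"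
  shows "(inv (\<tau> \<circ> Transposition.transpose i (i+1)) A < inv (\<tau> \<circ> Transposition.transpose i (i+1)) (A+1))
     \<longleftrightarrow> (inv \<tau> A < inv \<tau> (A+1))"
proof -
  let ?t = "Transposition.transpose A (A+1)" and ?T = "Transposition.transpose i (i+1)"
  have e: "inv (\<tau> \<circ> ?T) = ?T \<circ> inv \<tau>" using assms(1) by (simp add: o_inv_distrib)
  have ne: "?T \<circ> inv \<tau> \<noteq> inv \<tau> \<circ> ?t"
  proof
    assume h: "?T \<circ> inv \<tau> = inv \<tau> \<circ> ?t"
    have "?t \<circ> \<tau> = \<tau> \<circ> ?T"
    proof
      fix j
      have "?T (inv \<tau> (\<tau> j)) = inv \<tau> (?t (\<tau> j))" using h by (metis comp_apply)
      then have "?T j = inv \<tau> (?t (\<tau> j))" using assms(1) by (simp add: bij_is_inj)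
      then have "\<tau> (?T j) = ?t (\<tau> j)" using assms(1) by (metis bij_inv_eq_iff)
      then show "(?t \<circ> \<tau>) j = (\<tau> \<circ> ?T) j" by simp
    qed
    then show False using assms(2) by simp
  qed
  have "inj (inv \<tau>)" using assms(1) by (simp add: bij_imp_bij_inv bij_is_inj)
  from swap_cmp[OF this ne] show ?thesis unfolding e by simp
qed

definition Lop :: "complex \<Rightarrow> nat \<Rightarrow> nat \<Rightarrow> ((nat \<Rightarrow> nat) \<Rightarrow> complex) \<Rightarrow> ((nat \<Rightarrow> nat) \<Rightarrow> complex)" where
  "Lop q N i v = (\<lambda>\<pi>. if \<pi> \<in> SN N then (if \<pi> (i+1) < \<pi> i
      then v (\<pi> \<circ> Transposition.transpose i (i+1)) + (1 - q) * v \<pi>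
      else q * v (\<pi> \<circ> Transposition.transpose i (i+1))) else 0)"

lemma commute:
  assumes A: "1 \<le> A" "A + 1 \<le> N" and I: "1 \<le> i" "i + 1 \<le> N"
  shows "wop q N A x (Lop q N i v) \<tau> = Lop q N i (wop q N A x v) \<tau>"
proof (cases "\<tau> \<in> SN N")
  case False
  then show ?thesis using A by (simp add: wop_eq Lop_def)
next
  case True
  define t where "t = Transposition.transpose A (A+1)"
  define T where "T = Transposition.transpose i (i+1)"
  have tp: "t permutes {1..N}" unfolding t_def using A by (intro permutes_swap_id) auto
  have Tp: "T permutes {1..N}" unfolding T_def using I by (intro permutes_swap_id) auto
  have tauP: "\<tau> permutes {1..N}" using True by (simp add: SN_def)
  have m1: "t \<circ> \<tau> \<in> SN N" "\<tau> \<circ> T \<in> SN N" "t \<circ> (\<tau> \<circ> T) \<in> SN N"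
    using tp Tp tauP by (auto simp: SN_def intro!: permutes_compose)
  have bt: "bij \<tau>" "inj \<tau>" using tauP by (auto simp: permutes_bij permutes_inj)
  have W: "\<And>\<sigma>. \<sigma> \<in> SN N \<Longrightarrow> wop q N A x v \<sigma> = v \<sigma> * alf q A x \<sigma> + v (t \<circ> \<sigma>) * bet q A x (t \<circ> \<sigma>)"
    using A by (simp add: wop_eq t_def)
  have W2: "\<And>w. wop q N A x w \<tau> = w \<tau> * alf q A x \<tau> + w (t \<circ> \<tau>) * bet q A x (t \<circ> \<tau>)"
    using A True by (simp add: wop_eq t_def)
  have L: "\<And>w \<sigma>. \<sigma> \<in> SN N \<Longrightarrow> Lop q N i w \<sigma> = (if \<sigma> (i+1) < \<sigma> i then w (\<sigma> \<circ> T) + (1 - q) * w \<sigma> else q * w (\<sigma> \<circ> T))"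
    by (simp add: Lop_def T_def)
  have LHS: "wop q N A x (Lop q N i v) \<tau> =
     (if \<tau> (i+1) < \<tau> i then v (\<tau> \<circ> T) + (1 - q) * v \<tau> else q * v (\<tau> \<circ> T)) * alf q A x \<tau>
     + (if (t \<circ> \<tau>) (i+1) < (t \<circ> \<tau>) i then v (t \<circ> (\<tau> \<circ> T)) + (1 - q) * v (t \<circ> \<tau>) else q * v (t \<circ> (\<tau> \<circ> T))) * bet q A x (t \<circ> \<tau>)"
    using W2 L True m1 by (simp add: comp_assoc)
  have RHS: "Lop q N i (wop q N A x v) \<tau> =
     (if \<tau> (i+1) < \<tau> i then (v (\<tau> \<circ> T) * alf q A x (\<tau> \<circ> T) + v (t \<circ> (\<tau> \<circ> T)) * bet q A x (t \<circ> (\<tau> \<circ> T)))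
        + (1 - q) * (v \<tau> * alf q A x \<tau> + v (t \<circ> \<tau>) * bet q A x (t \<circ> \<tau>))
      else q * (v (\<tau> \<circ> T) * alf q A x (\<tau> \<circ> T) + v (t \<circ> (\<tau> \<circ> T)) * bet q A x (t \<circ> (\<tau> \<circ> T))))"
    using W L True m1 by simp
  show ?thesis
  proof (cases "t \<circ> \<tau> = \<tau> \<circ> T")
    case False
    have r: "((t \<circ> \<tau>) (i+1) < (t \<circ> \<tau>) i) \<longleftrightarrow> (\<tau> (i+1) < \<tau> i)"
      using swap_cmp'[OF bt(2)] False unfolding t_def T_def by blast
    have a1: "(inv (\<tau> \<circ> T) A < inv (\<tau> \<circ> T) (A+1)) \<longleftrightarrow> (inv \<tau> A < inv \<tau> (A+1))"
      using asc_inv[OF bt(1)] False unfolding t_def T_def by blast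
    have bt2: "bij (t \<circ> \<tau>)" using bt(1) unfolding t_def by (simp add: bij_comp)
    have F2: "t \<circ> (t \<circ> \<tau>) \<noteq> (t \<circ> \<tau>) \<circ> T"
    proof
      assume "t \<circ> (t \<circ> \<tau>) = (t \<circ> \<tau>) \<circ> T"
      then have "t \<circ> (t \<circ> (t \<circ> \<tau>)) = t \<circ> ((t \<circ> \<tau>) \<circ> T)" by simp
      moreover have "t \<circ> (t \<circ> (t \<circ> \<tau>)) = t \<circ> \<tau>" "t \<circ> ((t \<circ> \<tau>) \<circ> T) = \<tau> \<circ> T"
        unfolding t_def by (simp_all only: tt comp_assoc[symmetric]) (simp_all only: comp_assoc tt)
      ultimately show False using False by simp
    qed
    have a2: "(inv (t \<circ> \<tau> \<circ> T) A < inv (t \<circ> \<tau> \<circ> T) (A+1)) \<longleftrightarrow> (inv (t \<circ> \<tau>) A < inv (t \<circ> \<tau>) (A+1))"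
      using asc_inv[OF bt2] F2 unfolding t_def T_def by blast
    have e1: "alf q A x (\<tau> \<circ> T) = alf q A x \<tau>" using a1 by (simp add: alf_def)
    have e2: "bet q A x (t \<circ> (\<tau> \<circ> T)) = bet q A x (t \<circ> \<tau>)" using a2 by (simp add: bet_def comp_assoc)
    show ?thesis unfolding LHS RHS e1 e2 r by (simp add: algebra_simps)
  next
    case TT: True
    have tt': "\<And>f. t \<circ> (t \<circ> f) = f" unfolding t_def by (rule tt)
    have it: "inj (t \<circ> \<tau>)" using bt(2) unfolding t_def by (simp add: inj_compose)
    have c1: "t (\<tau> i) = \<tau> (i+1)" using fun_cong[OF TT, of i] by (simp add: T_def)
    have ne: "\<tau> i \<noteq> \<tau> (i+1)" using injD[OF bt(2), of i "i+1"] by auto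
    have cases: "\<tau> i = A \<and> \<tau> (i+1) = A+1 \<or> \<tau> i = A+1 \<and> \<tau> (i+1) = A"
      using c1 ne unfolding t_def transpose_eq_iff by auto
    have E: "wop q N A x (Lop q N i v) \<tau> =
     (if \<tau> (i+1) < \<tau> i then v (t \<circ> \<tau>) + (1 - q) * v \<tau> else q * v (t \<circ> \<tau>)) * alf q A x \<tau>
     + (if (t \<circ> \<tau>) (i+1) < (t \<circ> \<tau>) i then v \<tau> + (1 - q) * v (t \<circ> \<tau>) else q * v \<tau>) * bet q A x (t \<circ> \<tau>)"
      unfolding LHS TT[symmetric] tt' ..
    have F: "Lop q N i (wop q N A x v) \<tau> =
     (if \<tau> (i+1) < \<tau> i then (v (t \<circ> \<tau>) * alf q A x (t \<circ> \<tau>) + v \<tau> * bet q A x \<tau>)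
        + (1 - q) * (v \<tau> * alf q A x \<tau> + v (t \<circ> \<tau>) * bet q A x (t \<circ> \<tau>))
      else q * (v (t \<circ> \<tau>) * alf q A x (t \<circ> \<tau>) + v \<tau> * bet q A x \<tau>))"
      unfolding RHS TT[symmetric] tt' ..
    from cases show ?thesis
    proof
      assume h: "\<tau> i = A \<and> \<tau> (i+1) = A+1"
      have h2: "(t \<circ> \<tau>) i = A+1" "(t \<circ> \<tau>) (i+1) = A" using h by (auto simp: t_def)
      have i1: "inv \<tau> A = i" "inv \<tau> (A+1) = i+1" using h bt(2) by (auto intro: inv_f_eq)
      have i2: "inv (t \<circ> \<tau>) (A+1) = i" "inv (t \<circ> \<tau>) A = i+1" using h2 it by (auto intro: inv_f_eq)
      show ?thesis unfolding E F using h h2 i1 i2 by (simp add: alf_def bet_def algebra_simps)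
    next
      assume h: "\<tau> i = A+1 \<and> \<tau> (i+1) = A"
      have h2: "(t \<circ> \<tau>) i = A" "(t \<circ> \<tau>) (i+1) = A+1" using h by (auto simp: t_def)
      have i1: "inv \<tau> (A+1) = i" "inv \<tau> A = i+1" using h bt(2) by (auto intro: inv_f_eq)
      have i2: "inv (t \<circ> \<tau>) A = i" "inv (t \<circ> \<tau>) (A+1) = i+1" using h2 it by (auto intro: inv_f_eq)
      show ?thesis unfolding E F using h h2 i1 i2 by (simp add: alf_def bet_def algebra_simps)
    qed
  qed
qed

lemma fold_commute:
  assumes "\<forall>(A, x) \<in> set ts. 1 \<le> A \<and> A + 1 \<le> N" "1 \<le> i" "i + 1 \<le> N"
  shows "fold (\<lambda>(A, x) v. wop q N A x v) ts (Lop q N i v) = Lop q N i (fold (\<lambda>(A, x) v. wop q N A x v) ts v)"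
  using assms(1)
proof (induction ts arbitrary: v)
  case Nil then show ?case by simp
next
  case (Cons a ts)
  obtain A x where a: "a = (A, x)" by fastforce
  have "wop q N A x (Lop q N i v) = Lop q N i (wop q N A x v)"
    using Cons.prems a assms(2,3) by (intro ext commute) auto
  then show ?case using Cons a by simp
qed

lemma base:
  assumes "s permutes {1..N}" "s i < s (i + 1)" "1 \<le> i" "i + 1 \<le> N"
  shows "Lop q N i (delta s) = delta (s \<circ> Transposition.transpose i (i + 1))"
proof
  fix \<pi>
  let ?T = "Transposition.transpose i (i + 1)"
  have Tp: "?T permutes {1..N}" using assms by (intro permutes_swap_id) auto
  have sT: "s \<circ> ?T \<in> SN N" using assms Tp by (simp add: SN_def permutes_compose)
  have eq: "(\<pi> \<circ> ?T = s) \<longleftrightarrow> (\<pi> = s \<circ> ?T)"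
    by (metis tt comp_assoc transpose_comp_involutory comp_id)
  show "Lop q N i (delta s) \<pi> = delta (s \<circ> ?T) \<pi>"
  proof (cases "\<pi> \<in> SN N")
    case False then show ?thesis using sT by (auto simp: Lop_def delta_def)
  next
    case True
    have L: "Lop q N i (delta s) \<pi> = (if \<pi> (i+1) < \<pi> i then delta s (\<pi> \<circ> ?T) + (1 - q) * delta s \<pi> else q * delta s (\<pi> \<circ> ?T))"
      using True by (simp add: Lop_def)
    have d1: "delta s (\<pi> \<circ> ?T) = delta (s \<circ> ?T) \<pi>" unfolding delta_def using eq by simp
    show ?thesis
    proof (cases "\<pi> (i+1) < \<pi> i")
      case True
      then have "\<pi> \<noteq> s" using assms(2) by auto
      then show ?thesis using True unfolding L d1 by (simp add: delta_def)
    next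
      case False
      then have "\<pi> \<noteq> s \<circ> ?T" using assms(2) by auto
      then show ?thesis using False unfolding L d1 by (simp add: delta_def)
    qed
  qed
qed

theorem proposition2p1:
  fixes N i :: nat and q :: complex and ts :: "(nat \<times> complex) list"
    and s \<pi> :: "nat \<Rightarrow> nat"
  assumes "N \<ge> 1"
    and "1 \<le> i" and "i + 1 \<le> N"
    and "\<forall>(A, x) \<in> set ts. 1 \<le> A \<and> A + 1 \<le> N"
    and "s permutes {1..N}" and "\<pi> permutes {1..N}"
    and "s i < s (i + 1)"
  shows "fcoef q N ts (s \<circ> Transposition.transpose i (i + 1)) \<pi> =
           (if \<pi> i > \<pi> (i + 1)
            then fcoef q N ts s (\<pi> \<circ> Transposition.transpose i (i + 1)) + (1 - q) * fcoef q N ts s \<pi>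
            else q * fcoef q N ts s (\<pi> \<circ> Transposition.transpose i (i + 1)))"
proof -
  have "fcoef q N ts (s \<circ> Transposition.transpose i (i + 1)) \<pi>
      = Lop q N i (fold (\<lambda>(A, x) v. wop q N A x v) ts (delta s)) \<pi>"
  proof -
    have "fcoef q N ts (s \<circ> Transposition.transpose i (i + 1)) \<pi>
       = fold (\<lambda>(A, x) v. wop q N A x v) ts (delta (s \<circ> Transposition.transpose i (i + 1))) \<pi>"
      by (simp only: fcoef_def)
    also have "\<dots> = fold (\<lambda>(A, x) v. wop q N A x v) ts (Lop q N i (delta s)) \<pi>"
      by (simp only: base[OF assms(5,7,2,3)])
    also have "\<dots> = Lop q N i (fold (\<lambda>(A, x) v. wop q N A x v) ts (delta s)) \<pi>"
      by (simp only: fold_commute[OF assms(4,2,3)])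
    finally show ?thesis .
  qed
  also have "\<dots> = (if \<pi> i > \<pi> (i + 1)
            then fcoef q N ts s (\<pi> \<circ> Transposition.transpose i (i + 1)) + (1 - q) * fcoef q N ts s \<pi>
            else q * fcoef q N ts s (\<pi> \<circ> Transposition.transpose i (i + 1)))"
    using assms(6) by (simp add: Lop_def SN_def fcoef_def)
  finally show ?thesis .
qed

end
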